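(* Let $n\in\mathbb{N}$ and $a\in\mathbb{R}$ with $|a|>5$. Let $\tilde{E}_n(a,1)$ be the $(n+1)\times n$ matrix whose $(i,j)$ entry is $a$ if $i=j$, $1$ if $j=i+1$, $a$ if $i=j+1$, $1$ if $i=j+2$, and $0$ otherwise, and let $\tilde{B}_n(a,1)$ be the $(n+3)\times n$ matrix whose first row is $(1,0,\dots,0)$, whose rows $2,\dots,n+2$ are the rows of $\tilde{E}_n(a,1)$ in order, and whose last row is $(0,\dots,0,1)$. For $1\le i<j<k\le n+3$, let $\tilde{B}_n(a,1)^{i,j,k}$ be the $n\times n$ matrix obtained by deleting the $i$-th, $j$-th and $k$-th rows of $\tilde{B}_n(a,1)$. Then $|\tilde{B}_n(a,1)^{i,j,k}|\neq0$.
   Context: $|M|$ denotes the determinant of a square matrix $M$. *)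

theory Defs
  imports "Jordan_Normal_Form.Determinant" "Jordan_Normal_Form.DL_Submatrix"
begin

text \<open>Entries use 1-based indices as in the paper.
  E_tilde n a is the (n+1) x n matrix with entries a (i=j), 1 (j=i+1), a (i=j+1), 1 (i=j+2), else 0.\<close>

definition E_entry :: "real \<Rightarrow> nat \<Rightarrow> nat \<Rightarrow> real" where
  "E_entry a i j = (if i = j then a else if j = i + 1 then 1
                    else if i = j + 1 then a else if i = j + 2 then 1 else 0)"

definition E_tilde :: "nat \<Rightarrow> real \<Rightarrow> real mat" where
  "E_tilde n a = mat (n + 1) n (\<lambda>(i, j). E_entry a (i + 1) (j + 1))"

definition B_entry :: "nat \<Rightarrow> real \<Rightarrow> nat \<Rightarrow> nat \<Rightarrow> real" where
  "B_entry n a r j = (if r = 1 then (if j = 1 then 1 else 0)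
                      else if r = n + 3 then (if j = n then 1 else 0)
                      else E_entry a (r - 1) j)"

definition B_tilde :: "nat \<Rightarrow> real \<Rightarrow> real mat" where
  "B_tilde n a = mat (n + 3) n (\<lambda>(r, j). B_entry n a (r + 1) (j + 1))"

definition delete_rows3 :: "'a mat \<Rightarrow> nat \<Rightarrow> nat \<Rightarrow> nat \<Rightarrow> 'a mat" where
  "delete_rows3 M i j k = submatrix M (UNIV - {i - 1, j - 1, k - 1}) UNIV"

end

theory Submission
  imports Defs
begin

definition Pc :: "real \<Rightarrow> nat \<Rightarrow> nat \<Rightarrow> real" where
  "Pc a r c = (if r = c then 1 else 0) + (if r = c+1 then a else 0)
     + (if r = c+2 then a else 0) + (if r = c+3 then 1 else 0)"

lemma B_idx:
  assumes "r < n + 3" "c < n"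
  shows "B_tilde n a $$ (r, c) = Pc a r c"
  using assms unfolding B_tilde_def B_entry_def E_entry_def Pc_def
  by auto

lemma sum_root:
  assumes "c < n"
  shows "(\<Sum>r<n+3. \<rho>^r * Pc a r c) = \<rho>^c * (1 + a*\<rho> + a*\<rho>^2 + \<rho>^3)"
proof -
  have "(\<Sum>r<n+3. \<rho>^r * Pc a r c) = (\<Sum>r<n+3. (if r = c then \<rho>^c else 0)
     + (if r = c+1 then a*\<rho>^(c+1) else 0) + (if r = c+2 then a*\<rho>^(c+2) else 0)
     + (if r = c+3 then \<rho>^(c+3) else 0))"
    by (rule sum.cong) (auto simp: Pc_def)
  also have "\<dots> = \<rho>^c + a*\<rho>^(c+1) + a*\<rho>^(c+2) + \<rho>^(c+3)"
    using assms by (simp add: sum.distrib)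
  also have "\<dots> = \<rho>^c * (1 + a*\<rho> + a*\<rho>^2 + \<rho>^3)"
    by (simp add: algebra_simps power_add power2_eq_square power3_eq_cube)
  finally show ?thesis .
qed

lemma cramer3:
  fixes x1 x2 x3 y1 y2 y3 al be ga :: real
  assumes D: "(x2*y3 - x3*y2) - (x1*y3 - x3*y1) + (x1*y2 - x2*y1) \<noteq> 0"
    and e1: "al + be*x1 + ga*y1 = 0" and e2: "al + be*x2 + ga*y2 = 0"
    and e3: "al + be*x3 + ga*y3 = 0"
  shows "al = 0 \<and> be = 0 \<and> ga = 0"
proof -
  let ?D = "(x2*y3 - x3*y2) - (x1*y3 - x3*y1) + (x1*y2 - x2*y1)"
  have "?D * al = (x2*y3 - x3*y2) * (al + be*x1 + ga*y1) - (x1*y3 - x3*y1) * (al + be*x2 + ga*y2)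
     + (x1*y2 - x2*y1) * (al + be*x3 + ga*y3)" by (simp add: algebra_simps)
  hence a: "?D * al = 0" using e1 e2 e3 by simp
  have "?D * be = (y2 - y3) * (al + be*x1 + ga*y1) - (y1 - y3) * (al + be*x2 + ga*y2)
     + (y1 - y2) * (al + be*x3 + ga*y3)" by (simp add: algebra_simps)
  hence b: "?D * be = 0" using e1 e2 e3 by simp
  have "?D * ga = (x3 - x2) * (al + be*x1 + ga*y1) - (x3 - x1) * (al + be*x2 + ga*y2)
     + (x2 - x1) * (al + be*x3 + ga*y3)" by (simp add: algebra_simps)
  hence c: "?D * ga = 0" using e1 e2 e3 by simp
  show ?thesis using a b c D by simp
qed

lemma Dpos: fixes u w :: real assumes "1 < u" "u < w"
  shows "u*u - w*w - u + w + u*w*w - u*u*w > 0"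
proof -
  have "u*u - w*w - u + w + u*w*w - u*u*w = (w-u)*(u-1)*(w-1)" by (simp add: algebra_simps)
  thus ?thesis using assms by simp
qed

lemma D2: fixes u w :: real assumes "1 < u" "u < w"
  shows "u*u - w*w - u - w + u*w*w + u*u*w > 0"
proof -
  have "u*u > 1" "u*w > 1" using assms less_1_mult[of u u] less_1_mult[of u w] by simp_all
  have "u*u > u" "u*u*w > w" "u*w*w > w*w" using assms \<open>u*u > 1\<close> by (simp_all add: mult_strict_right_mono)
  thus ?thesis by linarith
qed

lemma D3: fixes u w :: real assumes "1 < u" "u < w"
  shows "u*u - w*w + u + w - u*w*w - u*u*w < 0"
proof -
  have "u*u > 1" "w*w > 1" "u*w > 1" using assms less_1_mult[of u u] less_1_mult[of w w] less_1_mult[of u w] by simp_all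
  have "u*w*w > w*w" "w*w > w" "u*u*w > u" "w*w > u*u" using assms \<open>u*u > 1\<close> \<open>w*w > 1\<close> \<open>u*w > 1\<close>
    by (simp_all add: mult_strict_right_mono mult_strict_mono)
  thus ?thesis by linarith
qed

lemma D4: fixes u w :: real assumes "1 < u" "u < w"
  shows "u*u - w*w + u - w - u*w*w + u*u*w < 0"
proof -
  have "u*u*w < u*w*w" "w*w > u*u" using assms
    by (simp_all add: mult_strict_right_mono mult_strict_mono)
  thus ?thesis using assms by linarith
qed

lemma p_root: fixes a \<rho> :: real assumes "\<rho>^2 + (a-1)*\<rho> + 1 = 0"
  shows "1 + a*\<rho> + a*\<rho>^2 + \<rho>^3 = 0"
proof -
  have "1 + a*\<rho> + a*\<rho>^2 + \<rho>^3 = (1+\<rho>)*(\<rho>^2 + (a-1)*\<rho> + 1)"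
    by (simp add: algebra_simps power2_eq_square power3_eq_cube)
  thus ?thesis using assms by simp
qed

lemma inv_root: fixes a \<rho> :: real assumes "\<rho>^2 + (a-1)*\<rho> + 1 = 0"
  shows "(1/\<rho>)^2 + (a-1)*(1/\<rho>) + 1 = 0"
proof -
  have "\<rho> \<noteq> 0" using assms by auto
  have "(1/\<rho>)^2 + (a-1)*(1/\<rho>) + 1 = (\<rho>^2 + (a-1)*\<rho> + 1) / \<rho>^2"
    using \<open>\<rho> \<noteq> 0\<close> by (simp add: field_simps power2_eq_square)
  thus ?thesis using assms by simp
qed

lemma t_exists: fixes c :: real assumes "c > 4"
  shows "\<exists>t. t > 1 \<and> t^2 - c*t + 1 = 0"
proof -
  define d where "d = sqrt (c^2 - 4)"
  have "c*c > 4*4" using mult_strict_mono[of 4 c 4 c] assms by simp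
  hence c4: "c^2 \<ge> 4" by (simp add: power2_eq_square)
  have d2: "d^2 = c^2 - 4" unfolding d_def using c4 by simp
  have d0: "d \<ge> 0" unfolding d_def using c4 by simp
  define t where "t = (c + d)/2"
  have "t^2 - c*t + 1 = (d^2 - c^2 + 4)/4" unfolding t_def by (simp add: field_simps power2_eq_square)
  also have "\<dots> = 0" using d2 by simp
  finally show ?thesis using assms d0 by (intro exI[of _ t]) (simp add: t_def)
qed

lemma Dnz: fixes u w \<sigma> \<tau> :: real assumes "1 < u" "u < w"
  and "\<sigma> = 1 \<or> \<sigma> = -1" and "\<tau> = 1 \<or> \<tau> = -1"
  shows "(u*(1/w) - (1/u)*w) - (\<sigma>*(1/w) - (1/u)*\<tau>) + (\<sigma>*w - u*\<tau>) \<noteq> 0"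
proof
  assume h: "(u*(1/w) - (1/u)*w) - (\<sigma>*(1/w) - (1/u)*\<tau>) + (\<sigma>*w - u*\<tau>) = 0"
  have "u \<noteq> 0" "w \<noteq> 0" using assms by auto
  have "((u*(1/w) - (1/u)*w) - (\<sigma>*(1/w) - (1/u)*\<tau>) + (\<sigma>*w - u*\<tau>)) * (u*w)
     = u*u - w*w - \<sigma>*u + \<tau>*w + \<sigma>*u*w*w - \<tau>*u*u*w"
    using \<open>u \<noteq> 0\<close> \<open>w \<noteq> 0\<close> by (simp add: field_simps)
  hence e: "u*u - w*w - \<sigma>*u + \<tau>*w + \<sigma>*u*w*w - \<tau>*u*u*w = 0" using h by simp
  show False using assms(3,4) e Dpos[OF assms(1,2)] D2[OF assms(1,2)] D3[OF assms(1,2)] D4[OF assms(1,2)]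
    by auto
qed

lemma three_roots:
  fixes a al be ga :: real and J K :: nat
  assumes a: "\<bar>a\<bar> > 5" and JK: "0 < J" "J < K"
    and eq: "\<And>\<rho>. \<rho> = -1 \<or> \<rho>^2 + (a-1)*\<rho> + 1 = 0 \<Longrightarrow> al + be*\<rho>^J + ga*\<rho>^K = 0"
  shows "al = 0 \<and> be = 0 \<and> ga = 0"
proof -
  define \<sigma> :: real where "\<sigma> = (-1)^J"
  define \<tau> :: real where "\<tau> = (-1)^K"
  have s: "\<sigma> = 1 \<or> \<sigma> = -1" "\<tau> = 1 \<or> \<tau> = -1" unfolding \<sigma>_def \<tau>_def
    by (cases "even J"; simp) (cases "even K"; simp)
  have sn: "\<sigma> \<noteq> 0" "\<tau> \<noteq> 0" using s by auto
  have e1: "al + be*\<sigma> + ga*\<tau> = 0" using eq[of "-1"] unfolding \<sigma>_def \<tau>_def by simp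
  show ?thesis
  proof (cases "a > 5")
    case True
    obtain t where t: "t > 1" "t^2 - (a-1)*t + 1 = 0" using t_exists[of "a-1"] True by auto
    have r2: "(-t)^2 + (a-1)*(-t) + 1 = 0" using t(2) by simp
    have r3: "(1/(-t))^2 + (a-1)*(1/(-t)) + 1 = 0" using inv_root[OF r2] .
    define u where "u = t^J"
    define w where "w = t^K"
    have u1: "1 < u" unfolding u_def using t JK by simp
    have uw: "u < w" unfolding u_def w_def using t JK by (simp add: power_strict_increasing)
    have pm: "(-t)^J = \<sigma>*u" "(-t)^K = \<tau>*w"
      unfolding \<sigma>_def \<tau>_def u_def w_def by (rule power_minus)+
    have pm2: "(1/(-t))^J = \<sigma>*(1/u)" "(1/(-t))^K = \<tau>*(1/w)"
      unfolding \<sigma>_def \<tau>_def u_def w_def by (simp_all add: power_minus[of "1/t"] power_divide)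
    have e2: "al + (be*\<sigma>)*u + (ga*\<tau>)*w = 0" using eq[of "-t"] r2
      unfolding pm by (simp add: mult.assoc)
    have e3: "al + (be*\<sigma>)*(1/u) + (ga*\<tau>)*(1/w) = 0" using eq[of "1/(-t)"] r3
      unfolding pm2 by (simp add: mult.assoc)
    have e1': "al + (be*\<sigma>)*1 + (ga*\<tau>)*1 = 0" using e1 by simp
    have "al = 0 \<and> be*\<sigma> = 0 \<and> ga*\<tau> = 0"
      by (rule cramer3[OF _ e1' e2 e3]) (use Dnz[OF u1 uw, of 1 1] in simp)
    thus ?thesis using sn by simp
  next
    case False
    hence a5: "a < -5" using a by auto
    obtain t where t: "t > 1" "t^2 - (1-a)*t + 1 = 0" using t_exists[of "1-a"] a5 by auto
    have r2: "t^2 + (a-1)*t + 1 = 0" using t(2) by (simp add: algebra_simps)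
    have r3: "(1/t)^2 + (a-1)*(1/t) + 1 = 0" using inv_root[OF r2] .
    define u where "u = t^J"
    define w where "w = t^K"
    have u1: "1 < u" unfolding u_def using t JK by simp
    have uw: "u < w" unfolding u_def w_def using t JK by (simp add: power_strict_increasing)
    have e2: "al + be*u + ga*w = 0" using eq[of "t"] r2
      unfolding u_def w_def by simp
    have e3: "al + be*(1/u) + ga*(1/w) = 0" using eq[of "1/t"] r3
      unfolding u_def w_def by (simp add: power_divide)
    show ?thesis
      by (rule cramer3[OF _ e1 e2 e3]) (use Dnz[OF u1 uw s] in simp)
  qed
qed


theorem proposition5p2:
  fixes n :: nat and a :: real and i j k :: nat
  assumes "\<bar>a\<bar> > 5"
    and "1 \<le> i" and "i < j" and "j < k" and "k \<le> n + 3"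
  shows "det (delete_rows3 (B_tilde n a) i j k) \<noteq> 0"
proof
  assume det0: "det (delete_rows3 (B_tilde n a) i j k) = 0"
  define D where "D = {i - 1, j - 1, k - 1}"
  define I where "I = UNIV - D"
  define B where "B = B_tilde n a"
  define S where "S = delete_rows3 B i j k"
  have SI: "S = submatrix B I UNIV" unfolding S_def I_def D_def delete_rows3_def by simp
  have dB: "dim_row B = n + 3" "dim_col B = n" unfolding B_def B_tilde_def by simp_all
  have Dsub: "D \<subseteq> {..<n+3}" unfolding D_def using assms by auto
  have dist: "i - 1 \<noteq> j - 1" "i - 1 \<noteq> k - 1" "j - 1 \<noteq> k - 1" using assms by auto
  have cD: "card D = 3" unfolding D_def using dist by simp
  have setI: "{r. r < dim_row B \<and> r \<in> I} = {..<n+3} - D" unfolding dB I_def by auto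
  have cI: "card {r. r < dim_row B \<and> r \<in> I} = n"
    unfolding setI using card_Diff_subset[OF _ Dsub] cD by (simp add: finite_subset[OF Dsub])
  have cJ: "card {c. c < dim_col B \<and> c \<in> (UNIV::nat set)} = n" unfolding dB by simp
  have Scar: "S \<in> carrier_mat n n" unfolding SI carrier_mat_def using dim_submatrix[of B I UNIV] cI cJ by simp
  have "det S = 0" using det0 unfolding S_def B_def .
  then obtain v where v: "v \<in> carrier_vec n" "v \<noteq> 0\<^sub>v n" "S *\<^sub>v v = 0\<^sub>v n"
    using det_0_iff_vec_prod_zero[OF Scar] by auto
  define Bv where "Bv r = (\<Sum>c<n. Pc a r c * v $ c)" for r
  have kept: "Bv r = 0" if r: "r < n + 3" "r \<notin> D" for r
  proof -
    define idx where "idx = card {x\<in>I. x < r}"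
    have rI: "r \<in> I" unfolding I_def using r by auto
    have "{x\<in>I. x < r} \<subset> {x. x < dim_row B \<and> x \<in> I}" using r rI dB by auto
    moreover have "finite {x. x < dim_row B \<and> x \<in> I}" by simp
    ultimately have idx: "idx < n" unfolding idx_def using cI psubset_card_mono by metis
    have "0 = (S *\<^sub>v v) $ idx" using v(3) idx by simp
    also have "\<dots> = (\<Sum>c<n. S $$ (idx, c) * v $ c)"
      using idx Scar v(1) by (simp add: mult_mat_vec_def scalar_prod_def lessThan_atLeast0)
    also have "\<dots> = (\<Sum>c<n. B $$ (r, c) * v $ c)"
    proof (rule sum.cong[OF refl])
      fix c assume c: "c \<in> {..<n}"
      have "S $$ (idx, c) = B $$ (r, c)"
        using submatrix_index_card[of r B c I UNIV] r rI c dB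
        unfolding SI idx_def by simp
      thus "S $$ (idx, c) * v $ c = B $$ (r, c) * v $ c" by simp
    qed
    also have "\<dots> = Bv r" unfolding Bv_def B_def
      by (rule sum.cong[OF refl]) (use r in \<open>simp add: B_idx\<close>)
    finally show ?thesis by simp
  qed
  have rootsum: "\<rho>^(i-1) * Bv (i-1) + \<rho>^(j-1) * Bv (j-1) + \<rho>^(k-1) * Bv (k-1) = 0"
    if p: "1 + a*\<rho> + a*\<rho>^2 + \<rho>^3 = 0" for \<rho>
  proof -
    have "(\<Sum>r<n+3. \<rho>^r * Bv r) = (\<Sum>r<n+3. \<Sum>c<n. \<rho>^r * Pc a r c * v $ c)"
      unfolding Bv_def by (simp add: sum_distrib_left mult.assoc)
    also have "\<dots> = (\<Sum>c<n. \<Sum>r<n+3. \<rho>^r * Pc a r c * v $ c)" by (rule sum.swap)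
    also have "\<dots> = (\<Sum>c<n. (\<Sum>r<n+3. \<rho>^r * Pc a r c) * v $ c)"
      by (simp add: sum_distrib_right)
    also have "\<dots> = 0" using p by (simp add: sum_root)
    finally have s0: "(\<Sum>r<n+3. \<rho>^r * Bv r) = 0" .
    have "(\<Sum>r<n+3. \<rho>^r * Bv r) = (\<Sum>r\<in>D. \<rho>^r * Bv r)"
      by (rule sum.mono_neutral_right) (use Dsub kept in auto)
    also have "\<dots> = \<rho>^(i-1) * Bv (i-1) + \<rho>^(j-1) * Bv (j-1) + \<rho>^(k-1) * Bv (k-1)"
      unfolding D_def using dist by simp
    finally show ?thesis using s0 by simp
  qed
  have zero3: "Bv (i-1) = 0 \<and> Bv (j-1) = 0 \<and> Bv (k-1) = 0"
  proof (rule three_roots[OF assms(1), of "j - i" "k - i"])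
    show "0 < j - i" "j - i < k - i" using assms by auto
    fix \<rho> :: real assume h: "\<rho> = -1 \<or> \<rho>^2 + (a-1)*\<rho> + 1 = 0"
    have p: "1 + a*\<rho> + a*\<rho>^2 + \<rho>^3 = 0"
      using h p_root by auto
    have nz: "\<rho> \<noteq> 0" using p by auto
    have "j - 1 = (i - 1) + (j - i)" "k - 1 = (i - 1) + (k - i)" using assms by auto
    hence "\<rho>^(i-1) * (Bv (i-1) + Bv (j-1) * \<rho>^(j-i) + Bv (k-1) * \<rho>^(k-i)) = 0"
      using rootsum[OF p] by (simp add: power_add algebra_simps)
    thus "Bv (i-1) + Bv (j-1) * \<rho>^(j-i) + Bv (k-1) * \<rho>^(k-i) = 0" using nz by simp
  qed
  have allz: "Bv r = 0" if "r < n + 3" for r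
    using kept[OF that] zero3 unfolding D_def by (cases "r \<in> D") (auto simp: D_def)
  have vz: "v $ c = 0" if "c < n" for c
    using that
  proof (induction c rule: less_induct)
    case (less c)
    have "0 = Bv c" using allz less.prems by simp
    also have "\<dots> = (\<Sum>c'<n. if c' = c then v $ c else 0)"
      unfolding Bv_def
    proof (rule sum.cong[OF refl])
      fix c' assume c': "c' \<in> {..<n}"
      show "Pc a c c' * v $ c' = (if c' = c then v $ c else 0)"
      proof (cases "c' < c")
        case True thus ?thesis using less.IH[of c'] less.prems by simp
      next
        case False thus ?thesis by (auto simp: Pc_def)
      qed
    qed
    also have "\<dots> = v $ c" using less.prems by simp
    finally show ?case by simp
  qed
  have "v = 0\<^sub>v n" by (rule eq_vecI) (use v(1) vz in auto)
  thus False using v(2) by simp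
qed

end
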